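(* Let $a\in\mathbb{R}$ and $b>0$. The equation $g(x)+g(x+a)+g(x+b)=0$ ($x\in\mathbb{R}$) admits a continuous periodic solution $g:\mathbb{R}\to\mathbb{R}$ that is not identically zero if and only if $$\frac{a}{b}\in\left\{\frac{2+3k}{1+3m},\ \frac{1+3m}{2+3k}:\ (m,k)\in\mathbb{Z}^2\right\}.$$ In particular, if $a/b\notin\mathbb{Q}$ then the equation admits no nonzero continuous periodic solution, and there are infinitely many rational numbers $p/q$ such that $a/b=p/q$ implies the equation admits no nonzero continuous periodic solution. *)

theory Defs
  imports Complex_Main
begin

definition periodic_fun :: "(real \<Rightarrow> real) \<Rightarrow> bool" where
  "periodic_fun g \<longleftrightarrow> (\<exists>T>0. \<forall>x. g (x + T) = g x)"

definition has_nonzero_cont_periodic_sol :: "real \<Rightarrow> real \<Rightarrow> bool" where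
  "has_nonzero_cont_periodic_sol a b \<longleftrightarrow>
     (\<exists>g::real \<Rightarrow> real. continuous_on UNIV g \<and> periodic_fun g \<and> (\<exists>x. g x \<noteq> 0) \<and>
        (\<forall>x. g x + g (x + a) + g (x + b) = 0))"

definition ratio_set :: "real set" where
  "ratio_set = {r. \<exists>m k :: int. r = (2 + 3 * of_int k) / (1 + 3 * of_int m)
                              \<or> r = (1 + 3 * of_int m) / (2 + 3 * of_int k)}"

end

theory Submission
  imports Defs "HOL-Analysis.Analysis"
begin


lemma per_int_gen:
  fixes h :: "real \<Rightarrow> 'a::real_normed_vector"
  assumes p: "\<And>x. h (x + T) = h x"
  shows "h (x + of_int k * T) = h x"
proof -
  have pn: "h (y + real n * T) = h y" for y n
  proof (induction n)
    case (Suc n)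
    have "h (y + real (Suc n) * T) = h ((y + real n * T) + T)" by (simp add: algebra_simps)
    then show ?case using Suc p by simp
  qed simp
  show ?thesis
  proof (cases "k \<ge> 0")
    case True
    then obtain n where "k = int n" using nonneg_eq_int by blast
    then show ?thesis using pn by simp
  next
    case False
    then obtain n where n: "k = - int n" by (metis neg_int_cases less_le not_le)
    have "h (x + of_int k * T) = h ((x + of_int k * T) + real n * T)" using pn by simp
    also have "\<dots> = h x" using n by simp
    finally show ?thesis .
  qed
qed

lemma per_shift_int:
  fixes h :: "real \<Rightarrow> complex"
  assumes T: "T > 0" and c: "continuous_on UNIV h" and p: "\<And>x. h (x + T) = h x"
  shows "integral {0..T} (\<lambda>x. h (x + s)) = integral {0..T} h"
proof -
  define k where "k = floor (s / T)"
  define r where "r = s - of_int k * T"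
  have k1: "of_int k \<le> s / T" unfolding k_def by simp
  have k2: "s / T < of_int k + 1" unfolding k_def by simp
  have "of_int k * T \<le> s" using k1 T by (simp add: le_divide_eq)
  then have r0: "0 \<le> r" unfolding r_def by simp
  have "s < (of_int k + 1) * T" using k2 T by (simp add: divide_less_eq)
  then have rT: "r < T" unfolding r_def by (simp add: algebra_simps)
  have hs: "h (x + s) = h (x + r)" for x
    using per_int_gen[of h T "x + r" k, OF p] by (simp add: r_def algebra_simps)
  have ci: "continuous_on S h" for S using c continuous_on_subset by blast
  have "integral {0..T} (\<lambda>x. h (x + s)) = integral {0..T} (h \<circ> (\<lambda>x. x + r))"
    using hs by (simp add: o_def)
  also have "\<dots> = integral {0+r..T+r} h" by (rule integral_shift[OF ci])
  also have "\<dots> = integral {r..T+r} h" by simp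
  also have "\<dots> = integral {r..T} h + integral {T..T+r} h"
    using r0 rT by (intro Henstock_Kurzweil_Integration.integral_combine[symmetric]) (auto intro: integrable_continuous_interval ci)
  also have "integral {T..T+r} h = integral {0..r} (h \<circ> (\<lambda>x. x + T))"
    using integral_shift[OF ci, of 0 r T] by (simp add: add.commute)
  also have "\<dots> = integral {0..r} h" using p by (simp add: o_def)
  also have "integral {r..T} h + integral {0..r} h = integral {0..T} h"
    using r0 rT Henstock_Kurzweil_Integration.integral_combine[of 0 r T h] integrable_continuous_interval[OF ci]
    by (simp add: add.commute)
  finally show ?thesis by simp
qed

lemma per_reflect_int:
  fixes h :: "real \<Rightarrow> complex"
  assumes T: "T > 0" and c: "continuous_on UNIV h" and p: "\<And>x. h (x + T) = h x"
  shows "integral {0..T} (\<lambda>x. h (s - x)) = integral {0..T} h"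
proof -
  have ci: "continuous_on S h" for S using c continuous_on_subset by blast
  have "integral {0..T} (\<lambda>x. h (s - x)) = integral {-T..0} (\<lambda>y. h (s + y))"
    using Henstock_Kurzweil_Integration.integral_reflect_real[of 0 "-T" "\<lambda>y. h (s + y)"] by simp
  also have "\<dots> = integral {-T..0} ((\<lambda>y. h (y + (s - T))) \<circ> (\<lambda>x. x + T))"
    by (simp add: o_def algebra_simps)
  also have "\<dots> = integral {0..T} (\<lambda>y. h (y + (s - T)))"
    by (subst integral_shift) (auto intro!: continuous_intros continuous_on_compose2[OF c])
  also have "\<dots> = integral {0..T} h" by (rule per_shift_int[OF T c p])
  finally show ?thesis .
qed



lemma ep_per:
  assumes T: "T > 0"
  shows "cis (2*pi * of_int n*(x+T)/T) = cis (2*pi * of_int n*x/T)"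
proof -
  have "2*pi * of_int n*(x+T)/T = 2*pi * of_int n*x/T + 2*pi * of_int n" using T by (simp add: field_simps)
  then show ?thesis by (simp add: cis_mult[symmetric])
qed

lemma cos_cis: "complex_of_real (cos t) = (cis t + cis (-t)) / 2"
  by (simp add: complex_eq_iff)

lemma cos_pow_cis:
  "complex_of_real (cos t) ^ m =
     (\<Sum>j\<le>m. of_nat (m choose j) * cis (of_int (2 * int j - int m) * t)) / 2 ^ m"
proof -
  have "complex_of_real (cos t) ^ m = (cis t + cis (-t)) ^ m / 2 ^ m"
    by (simp add: cos_cis power_divide)
  also have "(cis t + cis (-t)) ^ m = (\<Sum>j\<le>m. of_nat (m choose j) * cis t ^ j * cis (-t) ^ (m - j))"
    by (rule binomial_ring)
  also have "\<dots> = (\<Sum>j\<le>m. of_nat (m choose j) * cis (of_int (2 * int j - int m) * t))"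
  proof (rule sum.cong[OF refl])
    fix j assume "j \<in> {..m}"
    then have jm: "j \<le> m" by simp
    have "cis t ^ j * cis (-t) ^ (m - j) = cis (real j * t + real (m - j) * (-t))"
      by (simp add: Complex.DeMoivre cis_mult)
    also have "real j * t + real (m - j) * (-t) = of_int (2 * int j - int m) * t"
      using jm by (simp add: of_nat_diff algebra_simps)
    finally show "of_nat (m choose j) * cis t ^ j * cis (-t) ^ (m - j) = of_nat (m choose j) * cis (of_int (2 * int j - int m) * t)"
      by (simp add: mult.assoc)
  qed
  finally show ?thesis .
qed



lemma coef_phi:
  fixes g :: "real \<Rightarrow> real"
  assumes T: "T > 0" and c: "continuous_on UNIV g" and p: "\<And>x. g (x + T) = g x"
    and H: "\<And>n::int. integral {0..T} (\<lambda>x. complex_of_real (g x) * cis (2*pi * of_int n * x/T)) = 0"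
  shows "integral {0..T} (\<lambda>x. complex_of_real (g (s + x) + g (s - x)) * cis (2*pi * of_int n * x/T)) = 0"
proof -
  define k where "k n y = complex_of_real (g y) * cis (2*pi * of_int n * y/T)" for n y
  have kc: "continuous_on UNIV (k n)" for n
    unfolding k_def using T by (auto intro!: continuous_intros continuous_on_compose2[OF c])
  have kp: "k n (y + T) = k n y" for n y
    unfolding k_def using p ep_per[OF T] by simp
  have A1: "integral {0..T} (\<lambda>x. complex_of_real (g (s+x)) * cis (2*pi * of_int n * x/T)) = 0"
  proof -
    have eq: "complex_of_real (g (s+x)) * cis (2*pi * of_int n * x/T) = k n (x + s) * cis (-(2*pi * of_int n * s/T))" for x
    proof -
      have "2*pi * of_int n * (x+s)/T + -(2*pi * of_int n * s/T) = 2*pi * of_int n * x/T"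
        using T by (simp add: field_simps)
      then have "cis (2*pi * of_int n * (x+s)/T) * cis (-(2*pi * of_int n * s/T)) = cis (2*pi * of_int n * x/T)"
        by (simp add: cis_mult)
      then show ?thesis unfolding k_def by (simp add: add.commute mult.assoc)
    qed
    have "integral {0..T} (\<lambda>x. complex_of_real (g (s+x)) * cis (2*pi * of_int n * x/T))
        = integral {0..T} (\<lambda>x. k n (x + s)) * cis (-(2*pi * of_int n * s/T))"
      by (simp add: eq)
    also have "integral {0..T} (\<lambda>x. k n (x + s)) = integral {0..T} (k n)"
      by (rule per_shift_int[OF T kc kp])
    also have "\<dots> = 0" using H unfolding k_def by simp
    finally show ?thesis by simp
  qed
  have A2: "integral {0..T} (\<lambda>x. complex_of_real (g (s-x)) * cis (2*pi * of_int n * x/T)) = 0"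
  proof -
    have eq: "complex_of_real (g (s-x)) * cis (2*pi * of_int n * x/T) = k (-n) (s - x) * cis (2*pi * of_int n * s/T)" for x
    proof -
      have "2*pi * of_int (-n) * (s-x)/T + 2*pi * of_int n * s/T = 2*pi * of_int n * x/T"
        using T by (simp add: field_simps)
      then have "cis (2*pi * of_int (-n) * (s-x)/T) * cis (2*pi * of_int n * s/T) = cis (2*pi * of_int n * x/T)"
        by (simp add: cis_mult)
      then show ?thesis unfolding k_def by (simp add: mult.assoc)
    qed
    have "integral {0..T} (\<lambda>x. complex_of_real (g (s-x)) * cis (2*pi * of_int n * x/T))
        = integral {0..T} (\<lambda>x. k (-n) (s - x)) * cis (2*pi * of_int n * s/T)"
      by (simp add: eq)
    also have "integral {0..T} (\<lambda>x. k (-n) (s - x)) = integral {0..T} (k (-n))"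
      by (rule per_reflect_int[OF T kc kp])
    also have "\<dots> = 0" using H[of "-n"] unfolding k_def by simp
    finally show ?thesis by simp
  qed
  have i1: "(\<lambda>x. complex_of_real (g (s+x)) * cis (2*pi * of_int n * x/T)) integrable_on {0..T}"
    using T by (intro integrable_continuous_interval) (auto intro!: continuous_intros continuous_on_compose2[OF c])
  have i2: "(\<lambda>x. complex_of_real (g (s-x)) * cis (2*pi * of_int n * x/T)) integrable_on {0..T}"
    using T by (intro integrable_continuous_interval) (auto intro!: continuous_intros continuous_on_compose2[OF c])
  have "integral {0..T} (\<lambda>x. complex_of_real (g (s + x) + g (s - x)) * cis (2*pi * of_int n * x/T))
     = integral {0..T} (\<lambda>x. complex_of_real (g (s+x)) * cis (2*pi * of_int n * x/T) + complex_of_real (g (s-x)) * cis (2*pi * of_int n * x/T))"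
    by (simp add: ring_distribs)
  also have "\<dots> = 0" using integral_add[OF i1 i2] A1 A2 by simp
  finally show ?thesis .
qed



lemma cos_pow_int:
  fixes \<phi> :: "real \<Rightarrow> real"
  assumes T: "T > 0" and c: "continuous_on UNIV \<phi>"
    and H: "\<And>n::int. integral {0..T} (\<lambda>x. complex_of_real (\<phi> x) * cis (2*pi * of_int n * x/T)) = 0"
  shows "integral {0..T} (\<lambda>x. \<phi> x * cos (2*pi*x/T) ^ m) = 0"
proof -
  define N where "N j = 2 * int j - int m" for j
  have ci: "(\<lambda>x. \<phi> x * cos (2*pi*x/T) ^ m) integrable_on {0..T}"
    using T by (intro integrable_continuous_interval) (auto intro!: continuous_intros continuous_on_compose2[OF c])
  have ti: "(\<lambda>x. complex_of_real (\<phi> x) * cis (2*pi * of_int n * x/T)) integrable_on {0..T}" for n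
    using T by (intro integrable_continuous_interval) (auto intro!: continuous_intros continuous_on_compose2[OF c])
  have pt: "complex_of_real (\<phi> x * cos (2*pi*x/T) ^ m) =
      (\<Sum>j\<le>m. complex_of_real (\<phi> x) * cis (2*pi * of_int (N j) * x/T) * of_nat (m choose j)) / 2 ^ m" for x
  proof -
    have "complex_of_real (\<phi> x * cos (2*pi*x/T) ^ m) = complex_of_real (\<phi> x) * complex_of_real (cos (2*pi*x/T)) ^ m"
      by simp
    also have "\<dots> = complex_of_real (\<phi> x) * ((\<Sum>j\<le>m. of_nat (m choose j) * cis (of_int (N j) * (2*pi*x/T))) / 2 ^ m)"
      unfolding N_def by (simp only: cos_pow_cis)
    also have "\<dots> = (\<Sum>j\<le>m. complex_of_real (\<phi> x) * cis (of_int (N j) * (2*pi*x/T)) * of_nat (m choose j)) / 2 ^ m"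
      by (simp add: sum_distrib_left mult_ac)
    also have "\<dots> = (\<Sum>j\<le>m. complex_of_real (\<phi> x) * cis (2*pi * of_int (N j) * x/T) * of_nat (m choose j)) / 2 ^ m"
      by (simp add: mult_ac)
    finally show ?thesis .
  qed
  have "complex_of_real (integral {0..T} (\<lambda>x. \<phi> x * cos (2*pi*x/T) ^ m))
      = integral {0..T} (\<lambda>x. complex_of_real (\<phi> x * cos (2*pi*x/T) ^ m))"
  proof -
    have bl: "bounded_linear (complex_of_real)" by (rule bounded_linear_of_real)
    show ?thesis using integral_linear[OF ci bl] by (simp add: o_def)
  qed
  also have "\<dots> = integral {0..T} (\<lambda>x. (\<Sum>j\<le>m. complex_of_real (\<phi> x) * cis (2*pi * of_int (N j) * x/T) * of_nat (m choose j)) / 2 ^ m)"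
    by (simp only: pt)
  also have "\<dots> = (\<Sum>j\<le>m. integral {0..T} (\<lambda>x. complex_of_real (\<phi> x) * cis (2*pi * of_int (N j) * x/T) * of_nat (m choose j))) / 2 ^ m"
    by (subst integral_divide, subst integral_sum) (auto intro!: integrable_on_mult_left ti)
  also have "\<dots> = 0" using H by simp
  finally show ?thesis by simp
qed

lemma poly_int:
  fixes \<phi> :: "real \<Rightarrow> real"
  assumes T: "T > 0" and c: "continuous_on UNIV \<phi>"
    and H: "\<And>n::int. integral {0..T} (\<lambda>x. complex_of_real (\<phi> x) * cis (2*pi * of_int n * x/T)) = 0"
  shows "integral {0..T} (\<lambda>x. \<phi> x * (\<Sum>i\<le>n. a i * cos (2*pi*x/T) ^ i)) = 0"
proof -
  have ti: "(\<lambda>x. \<phi> x * cos (2*pi*x/T) ^ i) integrable_on {0..T}" for i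
    using T by (intro integrable_continuous_interval) (auto intro!: continuous_intros continuous_on_compose2[OF c])
  have "integral {0..T} (\<lambda>x. \<phi> x * (\<Sum>i\<le>n. a i * cos (2*pi*x/T) ^ i))
      = integral {0..T} (\<lambda>x. \<Sum>i\<le>n. a i * (\<phi> x * cos (2*pi*x/T) ^ i))"
    by (simp add: sum_distrib_left mult_ac)
  also have "\<dots> = (\<Sum>i\<le>n. a i * integral {0..T} (\<lambda>x. \<phi> x * cos (2*pi*x/T) ^ i))"
    using T by (subst integral_sum) (auto intro!: integrable_continuous_interval continuous_intros continuous_on_compose2[OF c])
  also have "\<dots> = 0" using cos_pow_int[OF T c H] by simp
  finally show ?thesis .
qed



lemma fourier_unique:
  fixes g :: "real \<Rightarrow> real"
  assumes T: "T > 0" and c: "continuous_on UNIV g" and p: "\<And>x. g (x + T) = g x"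
    and H: "\<And>n::int. integral {0..T} (\<lambda>x. complex_of_real (g x) * cis (2*pi * of_int n * x/T)) = 0"
  shows "g s = 0"
proof -
  define \<phi> where "\<phi> x = g (s + x) + g (s - x)" for x
  have \<phi>c: "continuous_on UNIV \<phi>" unfolding \<phi>_def
    by (auto intro!: continuous_intros continuous_on_compose2[OF c])
  have H\<phi>: "integral {0..T} (\<lambda>x. complex_of_real (\<phi> x) * cis (2*pi * of_int n * x/T)) = 0" for n
    unfolding \<phi>_def using coef_phi[OF T c p H] by simp
  have \<phi>e: "\<phi> (-x) = \<phi> x" for x unfolding \<phi>_def by simp
  have \<phi>p: "\<phi> (x + T) = \<phi> x" for x
  proof -
    have "g (s - (x+T)) = g (s - x)" using p[of "s - (x+T)"] by simp
    moreover have "g (s + (x + T)) = g (s + x)" using p[of "s + x"] by (simp add: add.assoc)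
    ultimately show ?thesis unfolding \<phi>_def by simp
  qed
  define F where "F y = \<phi> (arccos y * T / (2*pi))" for y
  have Fc: "continuous_on {-1..1} F"
  proof -
    have "continuous_on {-1..1} (\<lambda>y. arccos y * T / (2*pi))"
      by (intro continuous_intros continuous_on_arccos') auto
    then show ?thesis unfolding F_def using continuous_on_compose2[OF \<phi>c] by blast
  qed
  have FF: "F (cos (2*pi*x/T)) = \<phi> x" for x
  proof -
    obtain k where k: "arccos (cos (2*pi*x/T)) = \<bar>2*pi*x/T - of_int k * (2*pi)\<bar>"
      by (rule arccos_cos_eq_abs_2pi)
    have "2*pi*x/T - of_int k * (2*pi) = (2*pi/T) * (x - of_int k * T)"
      using T by (simp add: field_simps)
    then have "\<bar>2*pi*x/T - of_int k * (2*pi)\<bar> = (2*pi/T) * \<bar>x - of_int k * T\<bar>"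
      using T by (simp add: abs_mult)
    then have a: "arccos (cos (2*pi*x/T)) * T / (2*pi) = \<bar>x - of_int k * T\<bar>"
      using k T by simp
    have "\<phi> \<bar>x - of_int k * T\<bar> = \<phi> (x - of_int k * T)"
      using \<phi>e[of "x - of_int k * T"] by (cases "x - of_int k * T \<ge> 0") (auto simp: abs_if)
    also have "\<dots> = \<phi> (x + of_int (-k) * T)" by simp
    also have "\<dots> = \<phi> x" by (rule per_int_gen[of \<phi> T, OF \<phi>p])
    finally show ?thesis unfolding F_def a .
  qed
  have iabs: "(\<lambda>x. \<bar>\<phi> x\<bar>) integrable_on {0..T}"
    by (intro integrable_continuous_interval) (auto intro!: continuous_intros continuous_on_subset[OF \<phi>c])
  have isq: "(\<lambda>x. \<phi> x ^ 2) integrable_on {0..T}"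
    by (intro integrable_continuous_interval) (auto intro!: continuous_intros continuous_on_subset[OF \<phi>c])
  define I where "I = integral {0..T} (\<lambda>x. \<phi> x ^ 2)"
  define K where "K = integral {0..T} (\<lambda>x. \<bar>\<phi> x\<bar>)"
  have K0: "K \<ge> 0" unfolding K_def by (rule integral_nonneg[OF iabs]) simp
  have I0: "I \<ge> 0" unfolding I_def by (rule integral_nonneg[OF isq]) simp
  have Ke: "I \<le> e * K" if e: "e > 0" for e
  proof -
    obtain P where P: "real_polynomial_function P" "\<And>y. y \<in> {-1..1} \<Longrightarrow> \<bar>F y - P y\<bar> < e"
      using Stone_Weierstrass_real_polynomial_function[OF compact_Icc Fc e] by blast
    obtain a n where Pa: "P = (\<lambda>x. \<Sum>i\<le>n. a i * x^i)"
      using P(1) real_polynomial_function_iff_sum by blast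
    have bound: "\<phi> x ^ 2 \<le> e * \<bar>\<phi> x\<bar> + \<phi> x * P (cos (2*pi*x/T))" for x
    proof -
      have d: "\<bar>\<phi> x - P (cos (2*pi*x/T))\<bar> < e" using P(2)[of "cos (2*pi*x/T)"] FF by simp
      have "\<phi> x * (\<phi> x - P (cos (2*pi*x/T))) \<le> \<bar>\<phi> x * (\<phi> x - P (cos (2*pi*x/T)))\<bar>" by simp
      also have "\<dots> = \<bar>\<phi> x\<bar> * \<bar>\<phi> x - P (cos (2*pi*x/T))\<bar>" by (simp add: abs_mult)
      also have "\<dots> \<le> \<bar>\<phi> x\<bar> * e" using d by (intro mult_left_mono) auto
      finally show ?thesis by (simp add: power2_eq_square algebra_simps)
    qed
    have ip: "(\<lambda>x. \<phi> x * P (cos (2*pi*x/T))) integrable_on {0..T}"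
      unfolding Pa using T
      by (intro integrable_continuous_interval) (auto intro!: continuous_intros continuous_on_subset[OF \<phi>c])
    have iabs': "(\<lambda>x. e * \<bar>\<phi> x\<bar>) integrable_on {0..T}"
      by (intro integrable_continuous_interval) (auto intro!: continuous_intros continuous_on_subset[OF \<phi>c])
    have "I \<le> integral {0..T} (\<lambda>x. e * \<bar>\<phi> x\<bar> + \<phi> x * P (cos (2*pi*x/T)))"
      unfolding I_def by (rule integral_le[OF isq]) (auto intro!: integrable_add ip iabs' bound)
    also have "\<dots> = e * K + integral {0..T} (\<lambda>x. \<phi> x * P (cos (2*pi*x/T)))"
      unfolding K_def by (subst integral_add) (auto intro!: ip iabs')
    also have "integral {0..T} (\<lambda>x. \<phi> x * P (cos (2*pi*x/T))) = 0"
      unfolding Pa by (rule poly_int[OF T \<phi>c H\<phi>])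
    finally show ?thesis by simp
  qed
  have "I = 0"
  proof (rule ccontr)
    assume "I \<noteq> 0"
    then have Ip: "I > 0" using I0 by simp
    have "I \<le> (I / (K + 1)) * K" using Ke[of "I / (K+1)"] Ip K0 by simp
    also have "\<dots> < I" using Ip K0 by (simp add: field_simps)
    finally show False by simp
  qed
  then have hi: "((\<lambda>x. \<phi> x ^ 2) has_integral 0) (cbox 0 T)"
    using isq unfolding I_def by (simp add: has_integral_integral)
  have "(\<lambda>x. \<phi> x ^ 2) 0 = 0"
  proof (rule has_integral_0_cbox_imp_0[OF _ _ hi])
    show "continuous_on (cbox 0 T) (\<lambda>x. \<phi> x ^ 2)"
      by (auto intro!: continuous_intros continuous_on_subset[OF \<phi>c])
  qed (use T in auto)
  then show ?thesis unfolding \<phi>_def by simp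
qed



lemma per2pi: "cos (x + 2*pi * of_int j) = cos x" "sin (x + 2*pi * of_int j) = sin x"
  by (simp_all add: cos_add sin_add)

lemma trig_third:
  fixes j :: int
  shows "cos (2*pi*(3 * of_int j + 1)/3) = -1/2" "sin (2*pi*(3 * of_int j + 1)/3) = sqrt 3/2"
    "cos (2*pi*(3 * of_int j - 1)/3) = -1/2" "sin (2*pi*(3 * of_int j - 1)/3) = - (sqrt 3/2)"
proof -
  have e1: "2*pi*(3 * of_int j + 1)/3 = pi*2/3 + 2*pi * of_int j" by (simp add: field_simps)
  have e2: "2*pi*(3 * of_int j - 1)/3 = -(pi*2/3) + 2*pi * of_int j" by (simp add: field_simps)
  show "cos (2*pi*(3 * of_int j + 1)/3) = -1/2" unfolding e1 per2pi by (rule cos_120')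
  show "sin (2*pi*(3 * of_int j + 1)/3) = sqrt 3/2" unfolding e1 per2pi by (rule sin_120')
  show "cos (2*pi*(3 * of_int j - 1)/3) = -1/2" unfolding e2 per2pi cos_minus by (rule cos_120')
  show "sin (2*pi*(3 * of_int j - 1)/3) = - (sqrt 3/2)" unfolding e2 per2pi sin_minus sin_120' ..
qed

lemma cos_half_cases:
  assumes "cos \<alpha> = -1/2"
  obtains j :: int where "\<alpha> = 2*pi*(3 * of_int j + 1)/3" | j :: int where "\<alpha> = 2*pi*(3 * of_int j - 1)/3"
proof -
  obtain k where k: "arccos (cos \<alpha>) = \<bar>\<alpha> - of_int k * (2 * pi)\<bar>"
    by (rule arccos_cos_eq_abs_2pi)
  have "arccos (-1/2) = pi - pi/3" using arccos_minus[of "1/2"] by simp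
  then have "\<bar>\<alpha> - of_int k * (2 * pi)\<bar> = 2*pi/3" using k assms by simp
  then have "\<alpha> = 2*pi*(3 * of_int k + 1)/3 \<or> \<alpha> = 2*pi*(3 * of_int k - 1)/3"
    by (auto simp: abs_if field_simps split: if_splits)
  then show ?thesis using that by blast
qed

lemma den_ne: "(1 + 3 * real_of_int m) \<noteq> 0" "(2 + 3 * real_of_int k) \<noteq> 0"
proof -
  have "1 + 3 * m \<noteq> 0" by presburger
  then show "(1 + 3 * real_of_int m) \<noteq> 0"
    by (metis of_int_1 of_int_add of_int_eq_0_iff of_int_mult of_int_numeral)
  have "2 + 3 * k \<noteq> 0" by presburger
  then show "(2 + 3 * real_of_int k) \<noteq> 0"
    by (metis of_int_add of_int_eq_0_iff of_int_mult of_int_numeral)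
qed

lemma sol_from_lambda:
  assumes l: "l \<noteq> 0" and ca: "cos (l*a) = -1/2" and cb: "cos (l*b) = -1/2"
    and s: "sin (l*a) + sin (l*b) = 0"
  shows "has_nonzero_cont_periodic_sol a b"
  unfolding has_nonzero_cont_periodic_sol_def
proof (rule exI, intro conjI)
  show "continuous_on UNIV (\<lambda>x. cos (l*x))" by (intro continuous_intros)
  show "\<exists>x. cos (l*x) \<noteq> 0" by (intro exI[of _ 0]) simp
  have sb: "sin (l*b) = - sin (l*a)" using s by simp
  show "\<forall>x. cos (l*x) + cos (l*(x+a)) + cos (l*(x+b)) = 0"
  proof
    fix x
    have h1: "cos (l*(x+a)) = cos (l*x) * cos (l*a) - sin (l*x) * sin (l*a)" by (simp add: distrib_left cos_add)
    have h2: "cos (l*(x+b)) = cos (l*x) * cos (l*b) - sin (l*x) * sin (l*b)" by (simp add: distrib_left cos_add)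
    show "cos (l*x) + cos (l*(x+a)) + cos (l*(x+b)) = 0" unfolding h1 h2 ca cb sb by (simp add: algebra_simps)
  qed
  show "Defs.periodic_fun (\<lambda>x. cos (l*x))"
    unfolding Defs.periodic_fun_def
  proof (intro exI conjI allI)
    show "2*pi/\<bar>l\<bar> > 0" using l by simp
    fix x
    show "cos (l*(x + 2*pi/\<bar>l\<bar>)) = cos (l*x)"
    proof (cases "l > 0")
      case True
      then have "l*(x + 2*pi/\<bar>l\<bar>) = l*x + 2*pi" by (simp add: field_simps)
      then show ?thesis by simp
    next
      case False
      then have "l < 0" using l by simp
      then have "l*(x + 2*pi/\<bar>l\<bar>) + 2*pi = l*x" by (simp add: field_simps)
      then show ?thesis by (metis cos_periodic)
    qed
  qed
qed

lemma sufficiency: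
  assumes b: "b > 0" and r: "a / b \<in> ratio_set"
  shows "has_nonzero_cont_periodic_sol a b"
proof -
  obtain m k :: int where mk: "a / b = (2 + 3 * of_int k) / (1 + 3 * of_int m) \<or> a / b = (1 + 3 * of_int m) / (2 + 3 * of_int k)"
    using r unfolding ratio_set_def by blast
  have d1: "(1 + 3 * real_of_int m) \<noteq> 0" and d2: "(2 + 3 * real_of_int k) \<noteq> 0" by (rule den_ne)+
  have ab: "a = b * (a / b)" using b by simp
  from mk show ?thesis
  proof
    assume h: "a / b = (2 + 3 * of_int k) / (1 + 3 * of_int m)"
    define l where "l = 2*pi*(1 + 3 * of_int m)/(3*b)"
    have lb: "l * b = 2*pi*(3 * of_int m + 1)/3" unfolding l_def using b by (simp add: field_simps)
    have la: "l * a = 2*pi*(3 * of_int (k+1) - 1)/3"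
    proof -
      have "l * a = (l * b) * (a / b)" using b by simp
      also have "\<dots> = 2*pi*(2 + 3 * of_int k)/3" unfolding lb h using d1 by (simp add: field_simps)
      finally show ?thesis by (simp add: field_simps)
    qed
    have "l \<noteq> 0" unfolding l_def using b d1 by simp
    moreover have "cos (l*a) = -1/2" unfolding la by (rule trig_third)
    moreover have "cos (l*b) = -1/2" unfolding lb by (rule trig_third)
    moreover have "sin (l*a) + sin (l*b) = 0" unfolding la lb trig_third by simp
    ultimately show ?thesis by (rule sol_from_lambda)
  next
    assume h: "a / b = (1 + 3 * of_int m) / (2 + 3 * of_int k)"
    define l where "l = 2*pi*(2 + 3 * of_int k)/(3*b)"
    have lb: "l * b = 2*pi*(3 * of_int (k+1) - 1)/3" unfolding l_def using b by (simp add: field_simps)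
    have la: "l * a = 2*pi*(3 * of_int m + 1)/3"
    proof -
      have "l * a = (l * b) * (a / b)" using b by simp
      also have "\<dots> = 2*pi*(2 + 3 * of_int k)/3 * ((1 + 3 * of_int m) / (2 + 3 * of_int k))"
        unfolding lb h by (simp add: field_simps)
      also have "\<dots> = 2*pi*(3 * of_int m + 1)/3" using d2 by (simp add: field_simps)
      finally show ?thesis .
    qed
    have "l \<noteq> 0" unfolding l_def using b d2 by simp
    moreover have "cos (l*a) = -1/2" unfolding la by (rule trig_third)
    moreover have "cos (l*b) = -1/2" unfolding lb by (rule trig_third)
    moreover have "sin (l*a) + sin (l*b) = 0" unfolding la lb trig_third by simp
    ultimately show ?thesis by (rule sol_from_lambda)
  qed
qed



lemma necessity:
  assumes b: "b > 0" and h: "has_nonzero_cont_periodic_sol a b"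
  shows "a / b \<in> ratio_set"
proof -
  obtain g where c: "continuous_on UNIV g" and per: "Defs.periodic_fun g" and nz: "\<exists>x. g x \<noteq> 0"
    and eq: "\<forall>x. g x + g (x + a) + g (x + b) = 0"
    using h unfolding has_nonzero_cont_periodic_sol_def by blast
  obtain T where T: "T > 0" and p: "\<And>x. g (x + T) = g x" using per unfolding Defs.periodic_fun_def by blast
  obtain s where "g s \<noteq> 0" using nz by blast
  then obtain n :: int where Cn: "integral {0..T} (\<lambda>x. complex_of_real (g x) * cis (2*pi * of_int n * x/T)) \<noteq> 0"
    using fourier_unique[OF T c p] by blast
  define C where "C = integral {0..T} (\<lambda>x. complex_of_real (g x) * cis (2*pi * of_int n * x/T))"
  define k where "k y = complex_of_real (g y) * cis (2*pi * of_int n * y/T)" for y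
  have kc: "continuous_on UNIV k"
    unfolding k_def using T by (auto intro!: continuous_intros continuous_on_compose2[OF c])
  have kp: "k (y + T) = k y" for y
    unfolding k_def using p ep_per[OF T] by simp
  have gi: "(\<lambda>x. complex_of_real (g (x+d)) * cis (2*pi * of_int n * x/T)) integrable_on {0..T}" for d
    using T by (intro integrable_continuous_interval) (auto intro!: continuous_intros continuous_on_compose2[OF c])
  have sh: "integral {0..T} (\<lambda>x. complex_of_real (g (x+d)) * cis (2*pi * of_int n * x/T)) = C * cis (-(2*pi * of_int n * d/T))" for d
  proof -
    have eq: "complex_of_real (g (x+d)) * cis (2*pi * of_int n * x/T) = k (x + d) * cis (-(2*pi * of_int n * d/T))" for x
    proof -
      have "2*pi * of_int n * (x+d)/T + -(2*pi * of_int n * d/T) = 2*pi * of_int n * x/T"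
        using T by (simp add: field_simps)
      then have "cis (2*pi * of_int n * (x+d)/T) * cis (-(2*pi * of_int n * d/T)) = cis (2*pi * of_int n * x/T)"
        by (simp add: cis_mult)
      then show ?thesis unfolding k_def by (simp add: mult.assoc)
    qed
    have "integral {0..T} (\<lambda>x. complex_of_real (g (x+d)) * cis (2*pi * of_int n * x/T))
        = integral {0..T} (\<lambda>x. k (x + d)) * cis (-(2*pi * of_int n * d/T))"
      by (simp add: eq)
    also have "integral {0..T} (\<lambda>x. k (x + d)) = integral {0..T} k"
      by (rule per_shift_int[OF T kc kp])
    also have "\<dots> = C" unfolding k_def C_def by simp
    finally show ?thesis .
  qed
  define \<alpha> where "\<alpha> = -(2*pi * of_int n * a/T)"
  define \<beta> where "\<beta> = -(2*pi * of_int n * b/T)"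
  have "0 = integral {0..T} (\<lambda>x. complex_of_real (g x + g (x+a) + g (x+b)) * cis (2*pi * of_int n * x/T))"
    using eq by simp
  also have "\<dots> = integral {0..T} (\<lambda>x. complex_of_real (g (x+0)) * cis (2*pi * of_int n * x/T)
        + complex_of_real (g (x+a)) * cis (2*pi * of_int n * x/T)
        + complex_of_real (g (x+b)) * cis (2*pi * of_int n * x/T))"
    by (simp add: ring_distribs)
  also have "\<dots> = C * cis (-(2*pi * of_int n * 0/T)) + C * cis \<alpha> + C * cis \<beta>"
    unfolding \<alpha>_def \<beta>_def
    by (subst integral_add, intro integrable_add gi, rule gi, subst integral_add, (rule gi)+, simp only: sh)
  finally have "C * (1 + cis \<alpha> + cis \<beta>) = 0" by (simp add: ring_distribs)
  then have z: "1 + cis \<alpha> + cis \<beta> = 0" using Cn unfolding C_def by simp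
  have re: "1 + cos \<alpha> + cos \<beta> = 0" using arg_cong[OF z, of Re] by simp
  have im: "sin \<alpha> + sin \<beta> = 0" using arg_cong[OF z, of Im] by simp
  have sb: "sin \<beta> = - sin \<alpha>" using im by simp
  have cb': "cos \<beta> = -1 - cos \<alpha>" using re by simp
  have "(- sin \<alpha>)^2 + (-1 - cos \<alpha>)^2 = 1" using sin_cos_squared_add[of \<beta>] sb cb' by simp
  moreover have "(-1 - cos \<alpha>)^2 = 1 + 2 * cos \<alpha> + (cos \<alpha>)^2" by (simp add: power2_eq_square algebra_simps)
  moreover have "(- sin \<alpha>)^2 = (sin \<alpha>)^2" by simp
  ultimately have ca: "cos \<alpha> = -1/2" using sin_cos_squared_add[of \<alpha>] by linarith
  have cb: "cos \<beta> = -1/2" using ca cb' by simp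
  have n0: "n \<noteq> 0"
  proof
    assume "n = 0"
    then have "\<alpha> = 0" unfolding \<alpha>_def by simp
    then show False using ca by simp
  qed
  have ab: "a / b = \<alpha> / \<beta>" unfolding \<alpha>_def \<beta>_def using n0 T b by (simp add: field_simps)
  have q: "(2*pi*x/3)/(2*pi*y/3) = x/y" for x y :: real
    by (cases "y = 0") (simp_all add: field_simps)
  have r3: "sqrt 3 \<noteq> (0::real)" by simp
  show ?thesis
  proof (rule cos_half_cases[OF ca]; rule cos_half_cases[OF cb])
    fix j l :: int
    assume a1: "\<alpha> = 2*pi*(3 * of_int j + 1)/3" and b1: "\<beta> = 2*pi*(3 * of_int l + 1)/3"
    have "sin \<alpha> + sin \<beta> = sqrt 3" unfolding a1 b1 trig_third by simp
    then show ?thesis using im r3 by simp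
  next
    fix j l :: int
    assume a1: "\<alpha> = 2*pi*(3 * of_int j - 1)/3" and b1: "\<beta> = 2*pi*(3 * of_int l - 1)/3"
    have "sin \<alpha> + sin \<beta> = - sqrt 3" unfolding a1 b1 trig_third by simp
    then show ?thesis using im r3 by simp
  next
    fix j l :: int
    assume a1: "\<alpha> = 2*pi*(3 * of_int j + 1)/3" and b1: "\<beta> = 2*pi*(3 * of_int l - 1)/3"
    have "a / b = (3 * of_int j + 1) / (3 * of_int l - 1)"
      unfolding ab a1 b1 by (rule q)
    also have "\<dots> = (1 + 3 * of_int j) / (2 + 3 * of_int (l - 1))" by (simp add: algebra_simps)
    finally have "a / b = (1 + 3 * of_int j) / (2 + 3 * of_int (l - 1))" .
    then show ?thesis unfolding ratio_set_def by blast
  next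
    fix j l :: int
    assume a1: "\<alpha> = 2*pi*(3 * of_int j - 1)/3" and b1: "\<beta> = 2*pi*(3 * of_int l + 1)/3"
    have "a / b = (3 * of_int j - 1) / (3 * of_int l + 1)"
      unfolding ab a1 b1 by (rule q)
    also have "\<dots> = (2 + 3 * of_int (j - 1)) / (1 + 3 * of_int l)" by (simp add: algebra_simps)
    finally have "a / b = (2 + 3 * of_int (j - 1)) / (1 + 3 * of_int l)" .
    then show ?thesis unfolding ratio_set_def by blast
  qed
qed



lemma ratio_set_Rats: "ratio_set \<subseteq> \<rat>"
  unfolding ratio_set_def by (auto intro!: Rats_divide Rats_add Rats_mult)

lemma three_not_in: "3 * real n \<notin> ratio_set"
proof
  assume "3 * real n \<in> ratio_set"
  then obtain m k :: int where mk: "3 * real n = (2 + 3 * of_int k) / (1 + 3 * of_int m) \<or> 3 * real n = (1 + 3 * of_int m) / (2 + 3 * of_int k)"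
    unfolding ratio_set_def by blast
  have d1: "(1 + 3 * real_of_int m) \<noteq> 0" and d2: "(2 + 3 * real_of_int k) \<noteq> 0" by (rule den_ne)+
  from mk show False
  proof
    assume h: "3 * real n = (2 + 3 * of_int k) / (1 + 3 * of_int m)"
    then have "3 * real n * (1 + 3 * of_int m) = 2 + 3 * of_int k" using d1 by (simp add: field_simps)
    then have "real_of_int (3 * (int n * (1 + 3 * m))) = real_of_int (2 + 3 * k)" by simp
    then have "3 * (int n * (1 + 3 * m)) = 2 + 3 * k" by (simp only: of_int_eq_iff)
    then show False by presburger
  next
    assume h: "3 * real n = (1 + 3 * of_int m) / (2 + 3 * of_int k)"
    then have "3 * real n * (2 + 3 * of_int k) = 1 + 3 * of_int m" using d2 by (simp add: field_simps)
    then have "real_of_int (3 * (int n * (2 + 3 * k))) = real_of_int (1 + 3 * m)" by simp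
    then have "3 * (int n * (2 + 3 * k)) = 1 + 3 * m" by (simp only: of_int_eq_iff)
    then show False by presburger
  qed
qed

theorem mainTheorem8:
  fixes a b :: real
  assumes "b > 0"
  shows "(has_nonzero_cont_periodic_sol a b \<longleftrightarrow> a / b \<in> ratio_set)
    \<and> (a / b \<notin> \<rat> \<longrightarrow> \<not> has_nonzero_cont_periodic_sol a b)
    \<and> infinite {r \<in> \<rat>. \<forall>a' b' :: real. b' > 0 \<and> a' / b' = r \<longrightarrow> \<not> has_nonzero_cont_periodic_sol a' b'}"
proof (intro conjI)
  show iff: "has_nonzero_cont_periodic_sol a b \<longleftrightarrow> a / b \<in> ratio_set"
    using necessity[OF assms] sufficiency[OF assms] by blast
  show "a / b \<notin> \<rat> \<longrightarrow> \<not> has_nonzero_cont_periodic_sol a b"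
    using iff ratio_set_Rats by blast
  have sub: "range (\<lambda>n::nat. 3 * real n) \<subseteq> {r \<in> \<rat>. \<forall>a' b' :: real. b' > 0 \<and> a' / b' = r \<longrightarrow> \<not> has_nonzero_cont_periodic_sol a' b'}"
  proof (clarsimp)
    fix n :: nat and a' b' :: real
    assume "0 < b'" "a' / b' = 3 * real n" "has_nonzero_cont_periodic_sol a' b'"
    then show False using necessity[of b' a'] three_not_in[of n] by simp
  qed
  have "infinite (range (\<lambda>n::nat. 3 * real n))"
    by (rule range_inj_infinite) (auto simp: inj_on_def)
  then show "infinite {r \<in> \<rat>. \<forall>a' b' :: real. b' > 0 \<and> a' / b' = r \<longrightarrow> \<not> has_nonzero_cont_periodic_sol a' b'}"
    using sub infinite_super by blast
qed


end
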